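(* Let $\beta\geq2$ be an integer, and let $$u(z)=\frac{(1-|z|^2)^{2\beta-1}}{|1-z|^{2\beta}},\quad z\in\mathbb{D}.$$ Then there exist real constants $a$ and $b$ such that for every $\varphi\in C^2(\mathbb{T})$, $$\langle u_r,\varphi\rangle=a\varphi(1)+b(1-r)\varphi(1)+O((1-r)^2)\quad\text{as } r\to1.$$ In particular, the distributional boundary value and inward normal derivative of $u$ are $$f_0=\lim_{r\to1}u_r=a\delta_1\quad\text{and}\quad f_1=\partial_n u=\lim_{r\to1}(u_r-f_0)/(1-r)=b\delta_1\quad\text{in }\mathcal{D}'(\mathbb{T}).$$
   Context: $\mathbb{D}$ is the open unit disc and $\mathbb{T}=\partial\mathbb{D}$ the unit circle. For a function $u$ on $\mathbb{D}$ and $0\le r<1$, $u_r$ denotes the function on $\mathbb{T}$ given by $u_r(e^{i\theta})=u(re^{i\theta})$. The pairing is $\langle g,\varphi\rangle=\frac{1}{2\pi}\int_0^{2\pi}g(e^{i\theta})\varphi(e^{i\theta})\,d\theta$ for integrable $g$, extended to distributions $\mathcal{D}'(\mathbb{T})$ in the standard way; $\delta_1$ is the unit Dirac mass at $1\in\mathbb{T}$, i.e. $\langle\delta_1,\varphi\rangle=\varphi(1)$. Limits in $\mathcal{D}'(\mathbb{T})$ are in the distributional (weak) sense. *)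

theory Defs
  imports "HOL-Analysis.Analysis" "HOL-Library.Landau_Symbols"
begin

definition u_fun :: "nat \<Rightarrow> complex \<Rightarrow> real" where
  "u_fun \<beta> z = (1 - (cmod z)^2) ^ (2*\<beta> - 1) / (cmod (1 - z)) ^ (2*\<beta>)"

definition C2_circle :: "(complex \<Rightarrow> complex) \<Rightarrow> bool" where
  "C2_circle \<phi> \<longleftrightarrow> (\<exists>\<phi>1 \<phi>2.
      (\<forall>t. ((\<lambda>\<theta>. \<phi> (cis \<theta>)) has_vector_derivative \<phi>1 t) (at t)) \<and>
      (\<forall>t. (\<phi>1 has_vector_derivative \<phi>2 t) (at t)) \<and>
      continuous_on UNIV \<phi>2)"

definition pairing :: "(complex \<Rightarrow> complex) \<Rightarrow> (complex \<Rightarrow> complex) \<Rightarrow> complex" where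
  "pairing g \<phi> = integral {0..2*pi} (\<lambda>\<theta>. g (cis \<theta>) * \<phi> (cis \<theta>)) / of_real (2*pi)"

definition restr :: "(complex \<Rightarrow> real) \<Rightarrow> real \<Rightarrow> complex \<Rightarrow> complex" where
  "restr u r w = of_real (u (of_real r * w))"

end

theory Submission
  imports Defs "HOL-Computational_Algebra.Polynomial"
begin

definition DD :: "real \<Rightarrow> real \<Rightarrow> real" where "DD r t = 1 + r^2 - 2*r*cos t"
definition II :: "nat \<Rightarrow> real \<Rightarrow> real" where "II n r = integral {0..2*pi} (\<lambda>t. 1 / DD r t ^ n)"

lemma DD_alt: "DD r t = (1-r)^2 + 2*r*(1 - cos t)"
  by (simp add: DD_def power2_eq_square algebra_simps)

lemma DD_pos: "0 \<le> r \<Longrightarrow> r < 1 \<Longrightarrow> 0 < DD r t"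
proof -
  assume "0 \<le> r" "r < 1"
  then have "0 \<le> 2*r*(1 - cos t)" by simp
  moreover have "0 < (1-r)^2" using \<open>r<1\<close> by simp
  ultimately show ?thesis unfolding DD_alt by linarith
qed

lemma DD_cont: "continuous_on S (\<lambda>t. DD r t)"
  unfolding DD_def by (intro continuous_intros)

lemma DD_deriv: "((\<lambda>t. DD r t) has_real_derivative (2 * r * sin t)) (at t)"
  unfolding DD_def by (auto intro!: derivative_eq_intros)

lemma cont_inv_pow: "0 \<le> r \<Longrightarrow> r < 1 \<Longrightarrow> continuous_on S (\<lambda>t. 1 / DD r t ^ n)"
proof -
  assume a: "0 \<le> r" "r < 1"
  have "DD r t \<noteq> 0" for t using DD_pos[OF a, of t] by linarith
  then have "\<forall>t\<in>S. DD r t ^ n \<noteq> 0" by simp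
  then show ?thesis by (intro continuous_on_divide continuous_on_const continuous_on_power DD_cont)
qed

lemma II_integrable: "0 \<le> r \<Longrightarrow> r < 1 \<Longrightarrow> (\<lambda>t. 1 / DD r t ^ n) integrable_on {a..b}"
  by (intro integrable_continuous_interval cont_inv_pow) auto

lemma cmod_DD: "(cmod (1 - complex_of_real r * cis t))^2 = DD r t"
proof -
  have "(cmod (1 - complex_of_real r * cis t))^2 = (1 - r*cos t)^2 + (r * sin t)^2"
    by (simp add: cmod_power2)
  also have "\<dots> = (1 - r*cos t)^2 + r^2 * (1 - (cos t)^2)"
    by (simp add: power_mult_distrib sin_squared_eq)
  also have "\<dots> = DD r t" by (simp add: DD_def power2_eq_square algebra_simps)
  finally show ?thesis .
qed

lemma u_eq: assumes "0 \<le> r" "r < 1"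
  shows "u_fun \<beta> (complex_of_real r * cis t) = (1 - r^2)^(2*\<beta>-1) / DD r t ^ \<beta>"
proof -
  have "(cmod (1 - complex_of_real r * cis t)) ^ (2*\<beta>) = DD r t ^ \<beta>"
    by (simp add: power_mult cmod_DD)
  moreover have "cmod (complex_of_real r * cis t) = r" using assms by (simp add: norm_mult)
  ultimately show ?thesis unfolding u_fun_def by simp
qed

lemma cancel_aux: fixes x Y N :: real assumes "x \<noteq> 0" shows "x^2/Y * (N/x^2) = N/Y"
  using assms by (simp add: divide_simps)

lemma alg1: fixes r c w q :: real assumes q: "q = 1 - r*c" "q \<noteq> 0"
  shows "1 + 2 * (inverse (1 + (r*w/q)^2) * ((r*c*q - (r*w)^2)/q^2)) = (1 - r^2*c^2 - r^2*w^2)/(q^2 + (r*w)^2)"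
proof -
  have D: "q^2 + (r*w)^2 \<noteq> 0" using q(2) by (metis add_nonneg_eq_0_iff power_not_zero zero_le_power2)
  have i: "inverse (1 + (r*w/q)^2) = q^2/(q^2+(r*w)^2)" using q(2) D by (simp add: field_simps power_divide)
  have "1 + 2 * (inverse (1 + (r*w/q)^2) * ((r*c*q - (r*w)^2)/q^2)) = 1 + 2*(r*c*q - (r*w)^2)/(q^2+(r*w)^2)"
    unfolding i using q(2) cancel_aux[OF q(2)] by simp
  also have "\<dots> = (q^2 + (r*w)^2 + 2*(r*c*q - (r*w)^2))/(q^2+(r*w)^2)" using D by (simp add: field_simps)
  also have "q^2 + (r*w)^2 + 2*(r*c*q - (r*w)^2) = 1 - r^2*c^2 - r^2*w^2"
    unfolding q(1) by (simp add: power2_eq_square algebra_simps)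
  finally show ?thesis by simp
qed

lemma nz_rcos: fixes r t :: real assumes "0 \<le> r" "r < 1" shows "1 - r * cos t \<noteq> 0"
proof -
  have "r * cos t \<le> r" using assms mult_left_le[of "cos t" r] by simp
  then show ?thesis using assms by linarith
qed

lemma F_deriv: assumes "0 \<le> r" "r < 1"
  shows "((\<lambda>t. t + 2 * arctan(r * sin t / (1 - r * cos t))) has_real_derivative ((1-r^2)/DD r t)) (at t)"
proof -
  have nz: "1 - r * cos t \<noteq> 0" by (rule nz_rcos[OF assms])
  have DDe: "DD r t = (1 - r * cos t)^2 + (r * sin t)^2"
    using cmod_DD[of r t] by (simp add: cmod_power2)
  have e: "(1-r^2)/DD r t = (1 - r^2 * (cos t)^2 - r^2 * (sin t)^2) / ((1 - r * cos t)^2 + (r * sin t)^2)"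
    unfolding DDe by (simp add: sin_squared_eq power_mult_distrib algebra_simps)
  have g: "((\<lambda>t. r * sin t / (1 - r * cos t)) has_real_derivative
       ((r * cos t * (1 - r * cos t) - (r * sin t)^2)/(1 - r * cos t)^2)) (at t)"
    apply (rule DERIV_cong)
     apply (rule DERIV_divide)
       apply (rule DERIV_cmult) apply (rule DERIV_sin)
      apply (rule DERIV_diff) apply (rule DERIV_const) apply (rule DERIV_cmult) apply (rule DERIV_cos)
    using nz apply simp
    using nz by (simp add: power2_eq_square algebra_simps)
  have a: "((\<lambda>t. arctan (r * sin t / (1 - r * cos t))) has_real_derivative
       (inverse (1 + (r * sin t / (1 - r * cos t))^2) * ((r * cos t * (1 - r * cos t) - (r * sin t)^2)/(1 - r * cos t)^2))) (at t)"
    using DERIV_chain2[OF DERIV_arctan g] by simp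
  have "((\<lambda>t. t + 2 * arctan(r * sin t / (1 - r * cos t))) has_real_derivative
       (1 + 2 * (inverse (1 + (r * sin t / (1 - r * cos t))^2) * ((r * cos t * (1 - r * cos t) - (r * sin t)^2)/(1 - r * cos t)^2)))) (at t)"
    by (intro DERIV_add DERIV_ident DERIV_cmult a)
  then show ?thesis unfolding e using alg1[OF refl nz] by simp
qed

lemma r2_lt1: fixes r :: real assumes "0 \<le> r" "r < 1" shows "r^2 < 1"
proof -
  have "r*r \<le> r" using assms mult_left_le[of r r] by simp
  then show ?thesis using assms by (simp add: power2_eq_square)
qed

lemma II_1: assumes "0 \<le> r" "r < 1" shows "II 1 r = 2*pi/(1-r^2)"
proof -
  let ?F = "\<lambda>t. t + 2 * arctan(r * sin t / (1 - r * cos t))"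
  have "((\<lambda>t. (1-r^2)/DD r t) has_integral (?F (2*pi) - ?F 0)) {0..2*pi}"
    apply (rule fundamental_theorem_of_calculus)
     apply simp
    apply (rule has_vector_derivative_at_within)
    using F_deriv[OF assms] unfolding has_real_derivative_iff_has_vector_derivative by blast
  then have h: "((\<lambda>t. (1-r^2)/DD r t) has_integral 2*pi) {0..2*pi}" by simp
  have "((\<lambda>t. (1/(1-r^2)) * ((1-r^2)/DD r t)) has_integral (1/(1-r^2)) * (2*pi)) {0..2*pi}"
    by (rule has_integral_mult_right[OF h])
  moreover have "1-r^2 \<noteq> 0" using r2_lt1[OF assms] by simp
  ultimately have "((\<lambda>t. 1/DD r t ^ 1) has_integral 2*pi/(1-r^2)) {0..2*pi}"
    by simp
  then show ?thesis unfolding II_def by (rule integral_unique)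
qed

lemma alg2: fixes r C S D X n :: real
  assumes D: "D = 1 + r^2 - 2*r*C" and S: "S^2 = 1 - C^2" and nz: "D \<noteq> 0" "X \<noteq> 0" "r \<noteq> 0"
  shows "(C * (D*X) - S * (n * (2*r*S * X))) / ((D*X)*(D*X)) =
     n*(1-r^2)^2/(2*r) * (1/(D*(D*X))) + (1+r^2)*(1-2*n)/(2*r) * (1/(D*X)) + (n-1)/(2*r)*(1/X)"
proof -
  define E where "E = C*D - 2*r*n*S^2"
  have num: "2*r*E = n*(1-r^2)^2 + (1+r^2)*(1-2*n)*D + (n-1)*D^2"
    unfolding E_def S D by (simp add: algebra_simps power2_eq_square)
  have 1: "(C * (D*X) - S * (n * (2*r*S * X))) / ((D*X)*(D*X)) = E/(D*(D*X))"
    unfolding E_def using nz by (simp add: field_simps power2_eq_square)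
  have 2: "n*(1-r^2)^2/(2*r) * (1/(D*(D*X))) + (1+r^2)*(1-2*n)/(2*r) * (1/(D*X)) + (n-1)/(2*r)*(1/X)
     = (n*(1-r^2)^2 + (1+r^2)*(1-2*n)*D + (n-1)*D^2) / (2*r*(D*(D*X)))"
    using nz by (simp add: field_simps power2_eq_square)
  show ?thesis unfolding 1 2 num[symmetric] using nz by simp
qed

lemma G_deriv: assumes "0 < r" "r < 1" "n \<ge> 1"
  shows "((\<lambda>t. sin t / DD r t ^ n) has_real_derivative
   (real n*(1-r^2)^2/(2*r) * (1/DD r t ^ Suc n) + (1+r^2)*(1-2*real n)/(2*r) * (1/DD r t ^ n)
     + (real n-1)/(2*r)*(1/DD r t ^ (n-1)))) (at t)"
proof -
  obtain m where m: "n = Suc m" using assms(3) by (cases n) auto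
  have Dnz: "DD r t \<noteq> 0" using DD_pos[of r t] assms by linarith
  have d: "((\<lambda>t. sin t / DD r t ^ Suc m) has_real_derivative
     (cos t * DD r t ^ Suc m - sin t * ((1 + of_nat m) * (2 * r * sin t * DD r t ^ m))) / (DD r t ^ Suc m * DD r t ^ Suc m)) (at t)"
    by (intro DERIV_divide DERIV_sin DERIV_power_Suc DD_deriv) (simp add: Dnz)
  have e: "(cos t * DD r t ^ Suc m - sin t * ((1 + of_nat m) * (2 * r * sin t * DD r t ^ m))) / (DD r t ^ Suc m * DD r t ^ Suc m)
     = real n*(1-r^2)^2/(2*r) * (1/DD r t ^ Suc n) + (1+r^2)*(1-2*real n)/(2*r) * (1/DD r t ^ n)
     + (real n-1)/(2*r)*(1/DD r t ^ (n-1))"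
    unfolding m power_Suc diff_Suc_1 
    using alg2[of "DD r t" r "cos t" "sin t" "DD r t ^ m" "1 + real m"] Dnz assms
    by (simp add: DD_def sin_squared_eq)
  show ?thesis using d e m by simp
qed

lemma II_rec: assumes "0 < r" "r < 1" "n \<ge> 1"
  shows "real n*(1-r^2)^2/(2*r) * II (Suc n) r + (1+r^2)*(1-2*real n)/(2*r) * II n r
     + (real n-1)/(2*r) * II (n-1) r = 0"
proof -
  let ?G = "\<lambda>t. sin t / DD r t ^ n"
  let ?g = "\<lambda>t. real n*(1-r^2)^2/(2*r) * (1/DD r t ^ Suc n) + (1+r^2)*(1-2*real n)/(2*r) * (1/DD r t ^ n)
     + (real n-1)/(2*r)*(1/DD r t ^ (n-1))"
  have "(?g has_integral (?G (2*pi) - ?G 0)) {0..2*pi}"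
    apply (rule fundamental_theorem_of_calculus)
     apply simp
    apply (rule has_vector_derivative_at_within)
    using G_deriv[OF assms] unfolding has_real_derivative_iff_has_vector_derivative by blast
  then have h1: "(?g has_integral 0) {0..2*pi}" by simp
  have r0: "0 \<le> r" using assms by simp
  have i: "((\<lambda>t. 1 / DD r t ^ k) has_integral II k r) {0..2*pi}" for k
    unfolding II_def using II_integrable[OF r0 assms(2)] by blast
  have h2: "(?g has_integral (real n*(1-r^2)^2/(2*r) * II (Suc n) r + (1+r^2)*(1-2*real n)/(2*r) * II n r
     + (real n-1)/(2*r) * II (n-1) r)) {0..2*pi}"
    by (intro has_integral_add has_integral_mult_right i)
  show ?thesis using has_integral_unique[OF h2 h1] .
qed

definition QP :: "nat \<Rightarrow> real poly \<Rightarrow> bool" where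
  "QP n p \<longleftrightarrow> (\<forall>r. 0 < r \<and> r < 1 \<longrightarrow> (1-r^2)^(2*n-1) * II n r = 2*pi*poly p (1-r))"

lemma poly_a: "poly [:2,-2,1:] (1-r) = 1 + (r::real)^2"
  by (simp add: power2_eq_square algebra_simps)
lemma poly_b: "poly [:0,2,-1:] (1-r) = 1 - (r::real)^2"
  by (simp add: power2_eq_square algebra_simps)

lemma rec2: assumes "0 < r" "r < 1" "n \<ge> 1"
  shows "real n * (1-r^2)^2 * II (Suc n) r = (1+r^2)*(2*real n - 1) * II n r - (real n - 1) * II (n-1) r"
proof -
  define P where "P = real n*(1-r^2)^2 * II (Suc n) r"
  define Q where "Q = (1+r^2)*(1-2*real n) * II n r"
  define S where "S = (real n-1) * II (n-1) r"
  have "P/(2*r) + Q/(2*r) + S/(2*r) = 0" using II_rec[OF assms] unfolding P_def Q_def S_def by simp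
  then have "(P + Q + S)/(2*r) = 0" by (simp add: add_divide_distrib)
  then have h: "P + Q + S = 0" using assms(1) by simp
  have "Q = - ((1+r^2)*(2*real n - 1) * II n r)" unfolding Q_def by (simp add: algebra_simps)
  then show ?thesis using h unfolding P_def S_def by linarith
qed

lemma QP1: "QP 1 [:1:]"
  unfolding QP_def
proof (intro allI impI)
  fix r :: real assume r: "0 < r \<and> r < 1"
  then have "1 - r^2 \<noteq> 0" using r2_lt1[of r] by simp
  then show "(1-r^2)^(2*1-1) * II 1 r = 2*pi*poly [:1:] (1-r)"
    using II_1[of r] r by simp
qed

lemma QP2: "QP 2 [:2,-2,1:]"
  unfolding QP_def
proof (intro allI impI)
  fix r :: real assume r: "0 < r \<and> r < 1"
  then have nz: "1 - r^2 \<noteq> 0" using r2_lt1[of r] by simp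
  have h: "(1-r^2)^2 * II 2 r = (1+r^2) * II 1 r" using rec2[of r 1] r by (simp add: numeral_2_eq_2)
  have "(1-r^2)^3 * II 2 r = (1-r^2) * ((1-r^2)^2 * II 2 r)"
    by (simp only: numeral_3_eq_3 power_Suc power_0 mult_1_right power2_eq_square mult.assoc)
  also have "\<dots> = (1-r^2) * ((1+r^2) * II 1 r)" unfolding h ..
  also have "\<dots> = (1+r^2) * ((1-r^2) * II 1 r)" by (rule mult.left_commute)
  also have "(1-r^2) * II 1 r = 2*pi" using II_1[of r] r nz by simp
  finally have fin: "(1-r^2)^3 * II 2 r = (1+r^2) * (2*pi)" .
  have t: "2*2-1 = (3::nat)" by simp
  show "(1-r^2)^(2*2-1) * II 2 r = 2*pi*poly [:2,-2,1:] (1-r)"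
    unfolding poly_a t fin by simp
qed

lemma QP_step: assumes "n \<ge> 2" "QP (n-1) pm" "QP n pn"
  shows "QP (Suc n) (smult (1/real n) (smult (2*real n - 1) ([:2,-2,1:]*pn) - smult (real n - 1) ([:0,2,-1:]^2 * pm)))"
  unfolding QP_def
proof (intro allI impI)
  fix r :: real assume r: "0 < r \<and> r < 1"
  define x where "x = 1 - r^2"
  define a where "a = (1+r^2)*(2*real n - 1)"
  define b where "b = real n - 1"
  have e1: "2*Suc n - 1 = Suc (Suc (2*n-1))" using assms by simp
  have e2: "2*n - 1 = Suc (Suc (2*(n-1)-1))" using assms by simp
  have P1: "x^(2*n-1) = x^2 * x^(2*(n-1)-1)" by (subst e2) (simp add: power2_eq_square)
  have A: "x^(2*n-1) * II n r = 2*pi*poly pn (1-r)" using assms(3) r unfolding QP_def x_def by blast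
  have B: "x^(2*(n-1)-1) * II (n-1) r = 2*pi*poly pm (1-r)" using assms(2) r unfolding QP_def x_def by blast
  have R: "real n * x^2 * II (Suc n) r = a * II n r - b * II (n-1) r"
    unfolding x_def a_def b_def using rec2[of r n] r assms by simp
  have n0: "real n \<noteq> 0" using assms by simp
  have "x^(2*Suc n - 1) * II (Suc n) r = x^(2*n-1) * (x^2 * II (Suc n) r)"
    unfolding e1 by (simp add: power2_eq_square)
  also have "x^2 * II (Suc n) r = (a * II n r - b * II (n-1) r) / real n"
    using R n0 by (simp add: field_simps)
  also have "x^(2*n-1) * ((a * II n r - b * II (n-1) r) / real n)
     = (a * (x^(2*n-1) * II n r) - b * x^2 * (x^(2*(n-1)-1) * II (n-1) r)) / real n"
    unfolding P1 by (simp add: algebra_simps diff_divide_distrib)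
  also have "\<dots> = 2*pi*((a * poly pn (1-r) - b * x^2 * poly pm (1-r)) / real n)"
    unfolding A B by (simp add: algebra_simps diff_divide_distrib)
  also have "(a * poly pn (1-r) - b * x^2 * poly pm (1-r)) / real n =
     poly (smult (1/real n) (smult (2*real n - 1) ([:2,-2,1:]*pn) - smult (real n - 1) ([:0,2,-1:]^2 * pm))) (1-r)"
    unfolding a_def b_def x_def poly_smult poly_diff poly_mult poly_power poly_a poly_b
    using n0 by (simp add: field_simps)
  finally show "(1-r^2)^(2*Suc n-1) * II (Suc n) r =
     2*pi*poly (smult (1/real n) (smult (2*real n - 1) ([:2,-2,1:]*pn) - smult (real n - 1) ([:0,2,-1:]^2 * pm))) (1-r)"
    unfolding x_def .
qed

lemma QP_exists: "n \<ge> 1 \<Longrightarrow> \<exists>p. QP n p"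
proof -
  have "\<forall>k. (\<exists>p. QP (k+1) p) \<and> (\<exists>p. QP (k+2) p)"
  proof
    fix k show "(\<exists>p. QP (k+1) p) \<and> (\<exists>p. QP (k+2) p)"
    proof (induction k)
      case 0
      have "QP (0+1) [:1:]" using QP1 by simp
      moreover have "QP (0+2) [:2,-2,1:]" using QP2 by (simp add: numeral_2_eq_2)
      ultimately show ?case by blast
    next
      case (Suc k)
      then obtain pm pn where "QP (k+1) pm" "QP (k+2) pn" by blast
      then have "\<exists>p. QP (Suc (k+2)) p" using QP_step[of "k+2" pm pn] by auto
      then show ?case using Suc by simp
    qed
  qed
  moreover assume "n \<ge> 1"
  then obtain k where "n = k+1" by (metis le_add_diff_inverse2)
  ultimately show ?thesis by blast
qed

lemma onorm_sc: "onorm (\<lambda>h::real. h *\<^sub>R (v::'a::real_normed_vector)) = norm v"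
  using onorm_scaleR_left[of "\<lambda>x::real. x" v] onorm_id[where 'a=real] by (simp add: bounded_linear_ident)

lemma vd_bound:
  fixes g g' :: "real \<Rightarrow> 'a::real_normed_vector"
  assumes d: "\<And>t. t \<in> {a..b} \<Longrightarrow> (g has_vector_derivative g' t) (at t within {a..b})"
    and B: "\<And>t. t \<in> {a..b} \<Longrightarrow> norm (g' t) \<le> B" and "a \<le> b"
  shows "norm (g b - g a) \<le> B * (b - a)"
proof -
  have "norm (g b - g a) \<le> B * norm (b - a)"
    apply (rule differentiable_bound[where f'="\<lambda>t h. h *\<^sub>R g' t" and S="{a..b}"])
    using d B assms(3) by (auto simp: has_vector_derivative_def onorm_sc)
  then show ?thesis using assms(3) by simp
qed

lemma taylor_left:
  fixes f f1 f2 :: "real \<Rightarrow> 'a::real_normed_vector"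
  assumes d1: "\<And>t. (f has_vector_derivative f1 t) (at t)"
    and d2: "\<And>t. (f1 has_vector_derivative f2 t) (at t)"
    and M: "\<And>t. t \<in> {a..b} \<Longrightarrow> norm (f2 t) \<le> M" and ax: "a \<le> x" and xb: "x \<le> b"
  shows "norm (f x - f a - (x-a) *\<^sub>R f1 a) \<le> M*(x-a)^2"
proof -
  have s1: "norm (f1 t - f1 a) \<le> M * (t - a)" if "t \<in> {a..x}" for t
    apply (rule vd_bound)
    using that d2 M ax xb by (auto intro: has_vector_derivative_at_within)
  have M0: "0 \<le> M" using M[of a] ax xb by (meson atLeastAtMost_iff norm_ge_zero order_trans order_refl)
  let ?e = "\<lambda>t. f t - f a - (t-a) *\<^sub>R f1 a"
  have de: "(?e has_vector_derivative (f1 t - f1 a)) (at t within {a..x})" for t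
  proof -
    have "((\<lambda>t. (t-a) *\<^sub>R f1 a) has_vector_derivative f1 a) (at t)"
      using has_vector_derivative_scaleR[of "\<lambda>t. t - a" 1 t UNIV "\<lambda>_. f1 a" 0]
      by (auto intro!: derivative_eq_intros)
    then have "(?e has_vector_derivative (f1 t - 0 - f1 a)) (at t)"
      by (intro has_vector_derivative_diff d1 has_vector_derivative_const)
    then show ?thesis by (simp add: has_vector_derivative_at_within)
  qed
  have bnd: "norm (f1 t - f1 a) \<le> M*(x-a)" if t: "t \<in> {a..x}" for t
  proof -
    have "norm (f1 t - f1 a) \<le> M*(t-a)" using s1 t .
    also have "\<dots> \<le> M*(x-a)" using M0 t by (intro mult_left_mono) auto
    finally show ?thesis .
  qed
  have "norm (?e x - ?e a) \<le> (M*(x-a)) * (x - a)"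
    by (rule vd_bound[OF de bnd ax])
  then show ?thesis by (simp add: power2_eq_square mult.assoc)
qed

lemma taylor_right:
  fixes f f1 f2 :: "real \<Rightarrow> 'a::real_normed_vector"
  assumes d1: "\<And>t. (f has_vector_derivative f1 t) (at t)"
    and d2: "\<And>t. (f1 has_vector_derivative f2 t) (at t)"
    and M: "\<And>t. t \<in> {a..b} \<Longrightarrow> norm (f2 t) \<le> M" and ax: "a \<le> x" and xb: "x \<le> b"
  shows "norm (f x - f b - (x-b) *\<^sub>R f1 b) \<le> M*(b-x)^2"
proof -
  have s1: "norm (f1 b - f1 t) \<le> M * (b - t)" if "t \<in> {x..b}" for t
    apply (rule vd_bound)
    using that d2 M ax xb by (auto intro: has_vector_derivative_at_within)
  have M0: "0 \<le> M" using M[of b] ax xb by (meson atLeastAtMost_iff norm_ge_zero order_trans order_refl)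
  let ?e = "\<lambda>t. f t - f b - (t-b) *\<^sub>R f1 b"
  have de: "(?e has_vector_derivative (f1 t - f1 b)) (at t within {x..b})" for t
  proof -
    have "((\<lambda>t. (t-b) *\<^sub>R f1 b) has_vector_derivative f1 b) (at t)"
      using has_vector_derivative_scaleR[of "\<lambda>t. t - b" 1 t UNIV "\<lambda>_. f1 b" 0]
      by (auto intro!: derivative_eq_intros)
    then have "(?e has_vector_derivative (f1 t - 0 - f1 b)) (at t)"
      by (intro has_vector_derivative_diff d1 has_vector_derivative_const)
    then show ?thesis by (simp add: has_vector_derivative_at_within)
  qed
  have bnd: "norm (f1 t - f1 b) \<le> M*(b-x)" if t: "t \<in> {x..b}" for t
  proof -
    have "norm (f1 t - f1 b) \<le> M*(b-t)" using s1[OF t] by (simp add: norm_minus_commute)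
    also have "\<dots> \<le> M*(b-x)" using M0 t by (intro mult_left_mono) auto
    finally show ?thesis .
  qed
  have "norm (?e b - ?e x) \<le> (M*(b-x)) * (b - x)"
    by (rule vd_bound[OF de bnd xb])
  then show ?thesis by (simp add: power2_eq_square mult.assoc norm_minus_commute)
qed

lemma sin_minus_x: fixes x :: real shows "\<bar>sin x - x\<bar> \<le> \<bar>x\<bar>^3 / 6"
proof -
  have "\<bar>sin x - (\<Sum>m<3. sin_coeff m * x ^ m)\<bar> \<le> inverse (fact 3) * \<bar>x\<bar> ^ 3"
    by (rule Maclaurin_sin_bound)
  moreover have "(\<Sum>m<3. sin_coeff m * x ^ m) = x"
    by (simp add: numeral_3_eq_3 sin_coeff_def)
  moreover have "inverse (fact 3 :: real) = 1/6" by (simp add: numeral_3_eq_3)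
  ultimately show ?thesis by simp
qed

lemma sin_minus_x2: assumes "0 \<le> x" "x \<le> pi" shows "\<bar>sin x - x\<bar> \<le> x^2"
proof -
  have "\<bar>sin x - x\<bar> \<le> x^3 / 6" using sin_minus_x[of x] assms by simp
  also have "x^3/6 = x^2 * (x/6)" by (simp add: power3_eq_cube power2_eq_square)
  also have "\<dots> \<le> x^2 * 1" using assms pi_less_4 by (intro mult_left_mono) auto
  finally show ?thesis by simp
qed

lemma one_minus_cos_lb: assumes "0 \<le> x" "x \<le> pi" shows "x^2 \<le> 18 * (1 - cos x)"
proof -
  define y where "y = x/2"
  have y0: "0 \<le> y" and y2: "y \<le> 2" using assms pi_less_4 by (auto simp: y_def)
  have "y - sin y \<le> \<bar>sin y - y\<bar>" by (simp add: abs_if)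
  then have "y - sin y \<le> y^3/6" using sin_minus_x[of y] y0 by simp
  moreover have "y^3/6 = y * (y^2/6)" by (simp add: power3_eq_cube power2_eq_square)
  moreover have "y^2 \<le> 4"
  proof -
    have "y*y \<le> 2*2" using y0 y2 by (intro mult_mono) auto
    then show ?thesis by (simp add: power2_eq_square)
  qed
  moreover have "y * (y^2/6) \<le> y * (4/6)" using \<open>y^2 \<le> 4\<close> y0 by (intro mult_left_mono) auto
  ultimately have s: "y/3 \<le> sin y" by linarith
  have "1 - cos x = 2 * (sin y)^2" unfolding y_def using cos_double_sin[of "x/2"] by simp
  moreover have "(y/3)^2 \<le> (sin y)^2" using s y0 by (intro power_mono) auto
  ultimately show ?thesis unfolding y_def by (simp add: power2_eq_square)
qed

lemma R_bound:
  fixes f f1 f2 :: "real \<Rightarrow> complex"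
  assumes d1: "\<And>t. (f has_vector_derivative f1 t) (at t)"
    and d2: "\<And>t. (f1 has_vector_derivative f2 t) (at t)"
    and M: "\<And>t. t \<in> {0..2*pi} \<Longrightarrow> norm (f2 t) \<le> M"
    and per: "f (2*pi) = f 0" "f1 (2*pi) = f1 0"
    and th: "th \<in> {0..2*pi}"
  shows "norm (f th - f 0 - sin th *\<^sub>R f1 0) \<le> 18*(M + norm (f1 0)) * (1 - cos th)"
proof -
  have M0: "0 \<le> M" using M[of 0] by (meson atLeastAtMost_iff norm_ge_zero order_trans order_refl pi_ge_zero mult_nonneg_nonneg zero_le_numeral)
  have K0: "0 \<le> M + norm (f1 0)" using M0 by simp
  show ?thesis
  proof (cases "th \<le> pi")
    case True
    have th0: "0 \<le> th" using th by simp
    have T: "norm (f th - f 0 - th *\<^sub>R f1 0) \<le> M * th^2"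
      using taylor_left[of f f1 f2 0 "2*pi" M th, OF d1 d2 M] th by simp
    have S: "norm ((th - sin th) *\<^sub>R f1 0) \<le> th^2 * norm (f1 0)"
    proof -
      have "\<bar>th - sin th\<bar> \<le> th^2" using sin_minus_x2[OF th0 True] by (simp add: abs_minus_commute)
      then show ?thesis by (simp add: mult_right_mono)
    qed
    have eq: "f th - f 0 - sin th *\<^sub>R f1 0 = (f th - f 0 - th *\<^sub>R f1 0) + (th - sin th) *\<^sub>R f1 0"
      by (simp add: algebra_simps)
    have "norm (f th - f 0 - sin th *\<^sub>R f1 0) \<le> norm (f th - f 0 - th *\<^sub>R f1 0) + norm ((th - sin th) *\<^sub>R f1 0)"
      unfolding eq by (rule norm_triangle_ineq)
    also have "\<dots> \<le> M * th^2 + th^2 * norm (f1 0)" by (intro add_mono T S)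
    also have "\<dots> = (M + norm (f1 0)) * th^2" by (simp add: algebra_simps)
    also have "\<dots> \<le> (M + norm (f1 0)) * (18 * (1 - cos th))"
      using one_minus_cos_lb[OF th0 True] K0 by (intro mult_left_mono) auto
    also have "\<dots> = 18*(M + norm (f1 0)) * (1 - cos th)" by (simp add: algebra_simps)
    finally show ?thesis .
  next
    case False
    define s where "s = 2*pi - th"
    have s0: "0 \<le> s" "s \<le> pi" using th False by (auto simp: s_def)
    have T: "norm (f th - f (2*pi) - (th - 2*pi) *\<^sub>R f1 (2*pi)) \<le> M * s^2"
      using taylor_right[of f f1 f2 0 "2*pi" M th, OF d1 d2 M] th unfolding s_def by simp
    have sn: "sin th = - sin s" unfolding s_def by (simp add: sin_diff)
    have cs: "cos th = cos s" unfolding s_def by (simp add: cos_diff)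
    have S: "norm (((th - 2*pi) - sin th) *\<^sub>R f1 0) \<le> s^2 * norm (f1 0)"
    proof -
      have "(th - 2*pi) - sin th = -(s - sin s)" unfolding sn s_def by simp
      then have "\<bar>(th - 2*pi) - sin th\<bar> \<le> s^2" using sin_minus_x2[OF s0] by (simp add: abs_minus_commute)
      then show ?thesis by (simp add: mult_right_mono)
    qed
    have eq: "f th - f 0 - sin th *\<^sub>R f1 0 = (f th - f (2*pi) - (th - 2*pi) *\<^sub>R f1 (2*pi)) + ((th - 2*pi) - sin th) *\<^sub>R f1 0"
      unfolding per by (simp add: algebra_simps)
    have "norm (f th - f 0 - sin th *\<^sub>R f1 0) \<le> norm (f th - f (2*pi) - (th - 2*pi) *\<^sub>R f1 (2*pi)) + norm (((th - 2*pi) - sin th) *\<^sub>R f1 0)"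
      unfolding eq by (rule norm_triangle_ineq)
    also have "\<dots> \<le> M * s^2 + s^2 * norm (f1 0)" by (intro add_mono T S)
    also have "\<dots> = (M + norm (f1 0)) * s^2" by (simp add: algebra_simps)
    also have "\<dots> \<le> (M + norm (f1 0)) * (18 * (1 - cos s))"
      using one_minus_cos_lb[OF s0] K0 by (intro mult_left_mono) auto
    also have "\<dots> = 18*(M + norm (f1 0)) * (1 - cos th)" unfolding cs by (simp add: algebra_simps)
    finally show ?thesis .
  qed
qed

lemma DDnz: "0 \<le> r \<Longrightarrow> r < 1 \<Longrightarrow> DD r t \<noteq> 0"
  using DD_pos[of r t] by linarith

lemma II_hasint: "0 \<le> r \<Longrightarrow> r < 1 \<Longrightarrow> ((\<lambda>t. 1 / DD r t ^ k) has_integral II k r) {0..2*pi}"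
  unfolding II_def using II_integrable[of r k 0 "2*pi"] by blast

lemma K_int: assumes "0 \<le> r" "r < 1"
  shows "((\<lambda>t. c / DD r t ^ k) has_integral (c * II k r)) {0..2*pi}"
  using has_integral_mult_right[OF II_hasint[OF assms, of k], of c] by simp

lemma inv_deriv: assumes "0 \<le> r" "r < 1"
  shows "((\<lambda>t. 1 / DD r t ^ Suc j) has_real_derivative (-(2*r*(1+real j))) * (sin t / DD r t ^ Suc (Suc j))) (at t)"
proof -
  have Dnz: "DD r t \<noteq> 0" using DDnz[OF assms] .
  have d: "((\<lambda>t. 1 / DD r t ^ Suc j) has_real_derivative
     (0 * DD r t ^ Suc j - 1 * ((1 + of_nat j) * (2 * r * sin t * DD r t ^ j))) / (DD r t ^ Suc j * DD r t ^ Suc j)) (at t)"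
    by (intro DERIV_divide DERIV_const DERIV_power_Suc DD_deriv) (simp add: Dnz)
  have "(0 * DD r t ^ Suc j - 1 * ((1 + of_nat j) * (2 * r * sin t * DD r t ^ j))) / (DD r t ^ Suc j * DD r t ^ Suc j)
     = (-(2*r*(1+real j))) * (sin t / DD r t ^ Suc (Suc j))"
    unfolding power_Suc using Dnz by (simp add: field_simps)
  then show ?thesis using d by simp
qed

lemma Ksin_int: assumes "0 < r" "r < 1" "n \<ge> 2"
  shows "((\<lambda>t. c / DD r t ^ n * sin t) has_integral 0) {0..2*pi}"
proof -
  obtain j where j: "n = Suc (Suc j)" using assms(3) by (metis add_2_eq_Suc le_Suc_ex)
  have r0: "0 \<le> r" using assms by simp
  let ?H = "\<lambda>t. 1 / DD r t ^ Suc j"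
  have "((\<lambda>t. (-(2*r*(1+real j))) * (sin t / DD r t ^ Suc (Suc j))) has_integral (?H (2*pi) - ?H 0)) {0..2*pi}"
    apply (rule fundamental_theorem_of_calculus)
     apply simp
    apply (rule has_vector_derivative_at_within)
    using inv_deriv[OF r0 assms(2)] unfolding has_real_derivative_iff_has_vector_derivative by blast
  moreover have "?H (2*pi) - ?H 0 = 0" by (simp add: DD_def)
  ultimately have h: "((\<lambda>t. (-(2*r*(1+real j))) * (sin t / DD r t ^ Suc (Suc j))) has_integral 0) {0..2*pi}" by simp
  have cnz: "-(2*r*(1+real j)) \<noteq> 0" using assms by simp
  have h2: "((\<lambda>t. (c / (-(2*r*(1+real j)))) * ((-(2*r*(1+real j))) * (sin t / DD r t ^ Suc (Suc j)))) has_integral (c / (-(2*r*(1+real j)))) * 0) {0..2*pi}"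
    by (rule has_integral_mult_right[OF h])
  have e: "(\<lambda>t. (c / (-(2*r*(1+real j)))) * ((-(2*r*(1+real j))) * (sin t / DD r t ^ Suc (Suc j)))) = (\<lambda>t. c / DD r t ^ n * sin t)"
    unfolding j using cnz by (intro ext) simp
  show ?thesis using h2 unfolding e by simp
qed

lemma Kcos_int: assumes "0 < r" "r < 1" "n \<ge> 1"
  shows "((\<lambda>t. c / DD r t ^ n * (1 - cos t)) has_integral (c/(2*r) * (II (n-1) r - (1-r)^2 * II n r))) {0..2*pi}"
proof -
  have r0: "0 \<le> r" using assms by simp
  have h: "((\<lambda>t. c/(2*r) * (1 / DD r t ^ (n-1)) - c/(2*r)*(1-r)^2 * (1 / DD r t ^ n)) has_integral
      (c/(2*r) * II (n-1) r - c/(2*r)*(1-r)^2 * II n r)) {0..2*pi}"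
    by (intro has_integral_diff has_integral_mult_right II_hasint r0 assms(2))
  have e: "c/(2*r) * (1 / DD r t ^ (n-1)) - c/(2*r)*(1-r)^2 * (1 / DD r t ^ n) = c / DD r t ^ n * (1 - cos t)" for t
  proof -
    obtain m where m: "n = Suc m" using assms(3) by (cases n) auto
    have Dnz: "DD r t \<noteq> 0" using DDnz[OF r0 assms(2)] .
    have key: "DD r t - (1-r)^2 = 2*r*(1 - cos t)" unfolding DD_alt by simp
    have s1: "1 / DD r t ^ (n-1) = DD r t / DD r t ^ n" unfolding m using Dnz by simp
    have "c/(2*r) * (1 / DD r t ^ (n-1)) - c/(2*r)*(1-r)^2 * (1 / DD r t ^ n)
       = c/(2*r) * (DD r t / DD r t ^ n - (1-r)^2 / DD r t ^ n)" unfolding s1 by (simp add: algebra_simps)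
    also have "\<dots> = c/(2*r) * ((DD r t - (1-r)^2) / DD r t ^ n)" by (simp add: diff_divide_distrib)
    also have "\<dots> = c/(2*r) * (2*r*(1 - cos t) / DD r t ^ n)" unfolding key ..
    also have "\<dots> = c / DD r t ^ n * (1 - cos t)" using assms(1) by simp
    finally show ?thesis .
  qed
  show ?thesis using h unfolding e by (simp add: algebra_simps)
qed

lemma main_pt:
  fixes \<phi> :: "complex \<Rightarrow> complex" and v :: complex
  assumes r: "1/2 < r" "r < 1" and \<beta>: "\<beta> \<ge> 2"
    and hp: "QP \<beta> p" and hpm: "QP (\<beta>-1) pm"
    and polyp: "\<And>x. poly p x = a0 + x*(b0 + x*poly q x)"
    and Bq: "\<bar>poly q (1-r)\<bar> \<le> Bq" and Bm: "\<bar>poly pm (1-r)\<bar> \<le> Bm"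
    and cont: "continuous_on UNIV (\<lambda>t. \<phi> (cis t))"
    and Rb: "\<And>t. t \<in> {0..2*pi} \<Longrightarrow> norm (\<phi> (cis t) - \<phi> 1 - sin t *\<^sub>R v) \<le> C*(1 - cos t)"
    and C0: "0 \<le> C"
  shows "norm (pairing (restr (u_fun \<beta>) r) \<phi> - of_real a0 * \<phi> 1 - of_real b0 * of_real (1-r) * \<phi> 1)
          \<le> (norm (\<phi> 1) * Bq + 4*C*Bm) * (1-r)^2"
proof -
  have r0: "0 \<le> r" "0 < r" using r by auto
  define c where "c = (1-r^2)^(2*\<beta>-1)"
  define K where "K = (\<lambda>t. c / DD r t ^ \<beta>)"
  define Rm where "Rm = (\<lambda>t. \<phi> (cis t) - \<phi> 1 - sin t *\<^sub>R v)"
  define J where "J = integral {0..2*pi} (\<lambda>t. complex_of_real (K t) * Rm t)"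
  have Kcont: "continuous_on S K" for S unfolding K_def
    using cont_inv_pow[OF r0(1) r(2), of S \<beta>] continuous_on_mult_left[of S "\<lambda>t. 1 / DD r t ^ \<beta>" c] by simp
  have Rmcont: "continuous_on S Rm" for S unfolding Rm_def
    by (intro continuous_intros continuous_on_subset[OF cont]) auto
  have integrand: "(\<lambda>t. restr (u_fun \<beta>) r (cis t) * \<phi> (cis t))
     = (\<lambda>t. complex_of_real (K t) * \<phi> 1 + complex_of_real (K t * sin t) * v + complex_of_real (K t) * Rm t)"
  proof
    fix t
    have "restr (u_fun \<beta>) r (cis t) = complex_of_real (K t)"
      unfolding restr_def K_def c_def using u_eq[OF r0(1) r(2)] by simp
    moreover have "\<phi> (cis t) = \<phi> 1 + complex_of_real (sin t) * v + Rm t"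
      unfolding Rm_def by (simp add: scaleR_conv_of_real)
    ultimately show "restr (u_fun \<beta>) r (cis t) * \<phi> (cis t)
       = complex_of_real (K t) * \<phi> 1 + complex_of_real (K t * sin t) * v + complex_of_real (K t) * Rm t"
      by (simp add: algebra_simps)
  qed
  have I1: "((\<lambda>t. complex_of_real (K t) * \<phi> 1) has_integral complex_of_real (c * II \<beta> r) * \<phi> 1) {0..2*pi}"
    unfolding K_def by (intro has_integral_mult_left has_integral_of_real K_int r0(1) r(2))
  have I2: "((\<lambda>t. complex_of_real (K t * sin t) * v) has_integral 0) {0..2*pi}"
    using has_integral_mult_left[OF has_integral_of_real[OF Ksin_int[OF r0(2) r(2) \<beta>, of c]], of v]
    unfolding K_def by simp
  have I3: "((\<lambda>t. complex_of_real (K t) * Rm t) has_integral J) {0..2*pi}"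
    unfolding J_def
    by (intro integrable_integral integrable_continuous_interval continuous_intros Kcont Rmcont)
  have Itot: "((\<lambda>t. restr (u_fun \<beta>) r (cis t) * \<phi> (cis t)) has_integral
       (complex_of_real (c * II \<beta> r) * \<phi> 1 + 0 + J)) {0..2*pi}"
    unfolding integrand by (intro has_integral_add I1 I2 I3)
  have pair: "pairing (restr (u_fun \<beta>) r) \<phi> = (complex_of_real (c * II \<beta> r) * \<phi> 1 + J) / complex_of_real (2*pi)"
    unfolding pairing_def using integral_unique[OF Itot] by simp
  have cI: "c * II \<beta> r = 2*pi*poly p (1-r)" using hp r0 r unfolding QP_def c_def by blast
  have Kcos: "((\<lambda>t. (c*C) / DD r t ^ \<beta> * (1 - cos t)) has_integral
       ((c*C)/(2*r) * (II (\<beta>-1) r - (1-r)^2 * II \<beta> r))) {0..2*pi}"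
    using Kcos_int[OF r0(2) r(2), of \<beta> "c*C"] \<beta> by simp
  have nJ: "norm J \<le> (c*C)/(2*r) * (II (\<beta>-1) r - (1-r)^2 * II \<beta> r)"
  proof -
    have "norm J \<le> integral {0..2*pi} (\<lambda>t. (c*C) / DD r t ^ \<beta> * (1 - cos t))"
      unfolding J_def
    proof (rule integral_norm_bound_integral)
      show "(\<lambda>t. complex_of_real (K t) * Rm t) integrable_on {0..2*pi}" using I3 by blast
      show "(\<lambda>t. (c*C) / DD r t ^ \<beta> * (1 - cos t)) integrable_on {0..2*pi}" using Kcos by blast
      fix t assume t: "t \<in> {0..2*pi}"
      have K0: "0 \<le> K t" unfolding K_def c_def using DD_pos[OF r0(1) r(2), of t] r2_lt1[OF r0(1) r(2)] by simp
      have "norm (complex_of_real (K t) * Rm t) = K t * norm (Rm t)" using K0 by (simp add: norm_mult)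
      also have "\<dots> \<le> K t * (C * (1 - cos t))" using Rb[OF t] K0 unfolding Rm_def by (intro mult_left_mono) auto
      also have "\<dots> = (c*C) / DD r t ^ \<beta> * (1 - cos t)" unfolding K_def by simp
      finally show "norm (complex_of_real (K t) * Rm t) \<le> (c*C) / DD r t ^ \<beta> * (1 - cos t)" .
    qed
    also have "\<dots> = (c*C)/(2*r) * (II (\<beta>-1) r - (1-r)^2 * II \<beta> r)" using integral_unique[OF Kcos] .
    finally show ?thesis .
  qed
  have IIpos: "0 \<le> II \<beta> r" unfolding II_def
    using DD_pos[OF r0(1) r(2)] by (intro integral_nonneg II_integrable r0(1) r(2)) (auto intro!: zero_le_power less_imp_le)
  have c0: "0 \<le> c" unfolding c_def using r2_lt1[OF r0(1) r(2)] by simp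
  have cC: "0 \<le> (c*C)/(2*r)" using c0 C0 r0 by simp
  have nJ2: "norm J \<le> (c*C)/(2*r) * II (\<beta>-1) r"
  proof -
    have "(1-r)^2 * II \<beta> r \<ge> 0" using IIpos by simp
    then have "II (\<beta>-1) r - (1-r)^2 * II \<beta> r \<le> II (\<beta>-1) r" by linarith
    then show ?thesis using nJ cC by (meson mult_left_mono order_trans)
  qed
  have ce: "c * II (\<beta>-1) r = (1-r^2)^2 * (2*pi*poly pm (1-r))"
  proof -
    have e: "2*\<beta>-1 = Suc (Suc (2*(\<beta>-1)-1))" using \<beta> by simp
    have "c = (1-r^2)^2 * (1-r^2)^(2*(\<beta>-1)-1)" unfolding c_def e by (simp add: power2_eq_square)
    moreover have "(1-r^2)^(2*(\<beta>-1)-1) * II (\<beta>-1) r = 2*pi*poly pm (1-r)"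
      using hpm r0 r unfolding QP_def by blast
    ultimately show ?thesis by simp
  qed
  have Bm0: "0 \<le> Bm" using Bm by linarith
  have nJ3: "norm J \<le> 2*pi * (4*C*Bm*(1-r)^2)"
  proof -
    have "norm J \<le> C/(2*r) * (c * II (\<beta>-1) r)" using nJ2 by (simp add: algebra_simps)
    also have "\<dots> = C/(2*r) * (1-r^2)^2 * (2*pi*poly pm (1-r))" unfolding ce by simp
    also have "\<dots> \<le> C/(2*r) * (1-r^2)^2 * (2*pi*Bm)"
      using Bm C0 r0 by (intro mult_left_mono) auto
    also have "(1-r^2)^2 = (1-r)^2 * (1+r)^2" by (simp add: power2_eq_square algebra_simps)
    also have "C/(2*r) * ((1-r)^2 * (1+r)^2) * (2*pi*Bm) = 2*pi * (C*Bm*(1-r)^2) * ((1+r)^2/(2*r))"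
      by (simp add: algebra_simps)
    also have "\<dots> \<le> 2*pi * (C*Bm*(1-r)^2) * 4"
    proof (rule mult_left_mono)
      have "(1+r)*(1+r) \<le> 2*2" using r r0 by (intro mult_mono) auto
      then have "(1+r)^2 \<le> 4" by (simp add: power2_eq_square)
      moreover have "1 \<le> 2*r" using r by simp
      ultimately have "(1+r)^2 \<le> 4 * (2*r)" by linarith
      then show "(1+r)^2/(2*r) \<le> 4" using r0 by (simp add: pos_divide_le_eq)
      show "0 \<le> 2*pi * (C*Bm*(1-r)^2)" using C0 Bm0 by simp
    qed
    finally show ?thesis by (simp add: algebra_simps)
  qed
  have "pairing (restr (u_fun \<beta>) r) \<phi> - of_real a0 * \<phi> 1 - of_real b0 * of_real (1-r) * \<phi> 1
       = complex_of_real ((1-r)^2 * poly q (1-r)) * \<phi> 1 + J / complex_of_real (2*pi)"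
    unfolding pair cI polyp by (simp add: field_simps power2_eq_square)
  then have "norm (pairing (restr (u_fun \<beta>) r) \<phi> - of_real a0 * \<phi> 1 - of_real b0 * of_real (1-r) * \<phi> 1)
       \<le> norm (complex_of_real ((1-r)^2 * poly q (1-r)) * \<phi> 1) + norm (J / complex_of_real (2*pi))"
    by (simp add: norm_triangle_ineq)
  also have "norm (complex_of_real ((1-r)^2 * poly q (1-r)) * \<phi> 1) \<le> (1-r)^2 * Bq * norm (\<phi> 1)"
  proof -
    have "norm (complex_of_real ((1-r)^2 * poly q (1-r)) * \<phi> 1) = \<bar>(1-r)^2 * poly q (1-r)\<bar> * norm (\<phi> 1)"
      by (simp only: norm_mult norm_of_real)
    also have "\<dots> = (1-r)^2 * \<bar>poly q (1-r)\<bar> * norm (\<phi> 1)" by (simp add: abs_mult)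
    also have "\<dots> \<le> (1-r)^2 * Bq * norm (\<phi> 1)" using Bq by (intro mult_right_mono mult_left_mono) auto
    finally show ?thesis .
  qed
  also have "norm (J / complex_of_real (2*pi)) \<le> 4*C*Bm*(1-r)^2"
  proof -
    have "norm (J / complex_of_real (2*pi)) = norm J / (2*pi)" by (simp add: norm_divide)
    moreover have "norm J \<le> 4*C*Bm*(1-r)^2 * (2*pi)" using nJ3 by (simp only: mult.commute)
    ultimately show ?thesis by (simp add: pos_divide_le_eq)
  qed
  finally show ?thesis by (simp add: algebra_simps)
qed

lemma poly_bound: "\<exists>B. \<forall>x\<in>{0..1}. \<bar>poly (p::real poly) x\<bar> \<le> B"
proof -
  have "compact (poly p ` {0..1})"
    by (intro compact_continuous_image continuous_intros) auto
  then obtain B where "\<forall>y\<in>poly p ` {0..1}. norm y \<le> B" using compact_imp_bounded bounded_iff by metis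
  then show ?thesis by auto
qed

theorem theorem1p1:
  fixes \<beta> :: nat
  assumes "\<beta> \<ge> 2"
  shows "\<exists>a b :: real. \<forall>\<phi>. C2_circle \<phi> \<longrightarrow>
           (\<lambda>r. pairing (restr (u_fun \<beta>) r) \<phi>
                 - of_real a * \<phi> 1 - of_real b * of_real (1 - r) * \<phi> 1)
             \<in> O[at_left 1](\<lambda>r. of_real ((1 - r)^2) :: complex)"
proof -
  obtain p where hp: "QP \<beta> p" using QP_exists assms by fastforce
  obtain pm where hpm: "QP (\<beta>-1) pm" using QP_exists[of "\<beta>-1"] assms by fastforce
  obtain a0 p' where p: "p = pCons a0 p'" by (cases p)
  obtain b0 q where p': "p' = pCons b0 q" by (cases p')
  have polyp: "poly p x = a0 + x*(b0 + x*poly q x)" for x by (simp add: p p')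
  obtain Bq where Bq: "\<forall>x\<in>{0..1}. \<bar>poly q x\<bar> \<le> Bq" using poly_bound by blast
  obtain Bm where Bm: "\<forall>x\<in>{0..1}. \<bar>poly pm x\<bar> \<le> Bm" using poly_bound by blast
  show ?thesis
  proof (intro exI allI impI)
    fix \<phi> :: "complex \<Rightarrow> complex"
    assume "C2_circle \<phi>"
    then obtain \<phi>1 \<phi>2 where d1: "\<And>t. ((\<lambda>\<theta>. \<phi> (cis \<theta>)) has_vector_derivative \<phi>1 t) (at t)"
      and d2: "\<And>t. (\<phi>1 has_vector_derivative \<phi>2 t) (at t)" and c2: "continuous_on UNIV \<phi>2"
      unfolding C2_circle_def by blast
    define f where "f = (\<lambda>\<theta>. \<phi> (cis \<theta>))"
    have cont: "continuous_on UNIV f"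
      unfolding f_def using d1 by (meson continuous_at_imp_continuous_on has_vector_derivative_continuous)
    have per0: "f (2*pi) = f 0" unfolding f_def by simp
    have per1: "\<phi>1 (2*pi) = \<phi>1 0"
    proof -
      have "((f \<circ> (\<lambda>t. t + 2*pi)) has_vector_derivative (1 *\<^sub>R \<phi>1 (2*pi))) (at 0)"
        apply (rule vector_diff_chain_at)
         apply (auto intro!: derivative_eq_intros)[1]
        using d1[of "2*pi"] unfolding f_def by simp
      moreover have "f \<circ> (\<lambda>t. t + 2*pi) = f"
      proof
        fix t :: real
        have "cis (t + 2*pi) = cis t" by (simp add: complex_eq_iff)
        then show "(f \<circ> (\<lambda>t. t + 2*pi)) t = f t" unfolding f_def by simp
      qed
      ultimately have "(f has_vector_derivative \<phi>1 (2*pi)) (at 0)" by simp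
      moreover have "(f has_vector_derivative \<phi>1 0) (at 0)" using d1 unfolding f_def .
      ultimately show ?thesis by (rule vector_derivative_unique_at)
    qed
    obtain M where M: "\<And>t. t \<in> {0..2*pi} \<Longrightarrow> norm (\<phi>2 t) \<le> M"
    proof -
      have "compact (\<phi>2 ` {0..2*pi})"
        by (intro compact_continuous_image continuous_on_subset[OF c2]) auto
      then obtain B where "\<forall>y\<in>\<phi>2 ` {0..2*pi}. norm y \<le> B" using compact_imp_bounded bounded_iff by metis
      then show ?thesis by (intro that[of B]) auto
    qed
    define C where "C = 18*(M + norm (\<phi>1 0))"
    have M0: "0 \<le> M" using M[of 0] by (meson atLeastAtMost_iff norm_ge_zero order_trans order_refl pi_ge_zero mult_nonneg_nonneg zero_le_numeral)
    have C0: "0 \<le> C" unfolding C_def using M0 by simp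
    have Rb: "norm (\<phi> (cis t) - \<phi> 1 - sin t *\<^sub>R \<phi>1 0) \<le> C*(1 - cos t)" if t: "t \<in> {0..2*pi}" for t
      using R_bound[of f \<phi>1 \<phi>2 M t, OF d1[folded f_def] d2 M per0 per1 t] unfolding f_def C_def by simp
    have ev: "eventually (\<lambda>r. 1/2 < r \<and> r < (1::real)) (at_left 1)"
      by (rule eventually_at_leftI[of "1/2"]) auto
    show "(\<lambda>r. pairing (restr (u_fun \<beta>) r) \<phi> - of_real a0 * \<phi> 1 - of_real b0 * of_real (1 - r) * \<phi> 1)
             \<in> O[at_left 1](\<lambda>r. of_real ((1 - r)^2) :: complex)"
    proof (rule bigoI[where c = "norm (\<phi> 1) * Bq + 4*C*Bm"])
      show "eventually (\<lambda>r. norm (pairing (restr (u_fun \<beta>) r) \<phi> - of_real a0 * \<phi> 1 - of_real b0 * of_real (1 - r) * \<phi> 1)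
          \<le> (norm (\<phi> 1) * Bq + 4*C*Bm) * norm (of_real ((1 - r)^2) :: complex)) (at_left 1)"
      proof (rule eventually_mono[OF ev])
        fix r :: real assume r: "1/2 < r \<and> r < 1"
        have x01: "1 - r \<in> {0..1}" using r by auto
        have "norm (pairing (restr (u_fun \<beta>) r) \<phi> - of_real a0 * \<phi> 1 - of_real b0 * of_real (1 - r) * \<phi> 1)
          \<le> (norm (\<phi> 1) * Bq + 4*C*Bm) * (1-r)^2"
          using main_pt[OF _ _ assms hp hpm polyp
              Bq[rule_format, OF x01] Bm[rule_format, OF x01] cont[unfolded f_def] Rb C0] r by blast
        moreover have e: "norm (of_real ((1 - r)^2) :: complex) = (1-r)^2" by (simp only: norm_of_real abs_power2)
        ultimately show "norm (pairing (restr (u_fun \<beta>) r) \<phi> - of_real a0 * \<phi> 1 - of_real b0 * of_real (1 - r) * \<phi> 1)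
          \<le> (norm (\<phi> 1) * Bq + 4*C*Bm) * norm (of_real ((1 - r)^2) :: complex)"
          by (simp only: e)
      qed
    qed
  qed
qed

end
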